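(* Let ${\mathbf X} \in \mathbb{R}^{n \times d}$ be a matrix each of whose rows has Euclidean norm at most $1$, let $\gamma > 0$, and let ${\mathbf X}^*$ be the $\gamma$-smoothed version of ${\mathbf X}$ (defined in the context). Then the leverage scores of ${\mathbf X}^*$ satisfy $\ell_j({\mathbf X}^* ) \le 1/\gamma$ for all $j \in [n]$.
   Context: Write the singular value decomposition ${\mathbf X} = \sum_{k} \sigma_k u_k v_k^T$ with singular values $\sigma_k > 0$. The $\gamma$-smoothed matrix is ${\mathbf X}^* = \sum_{k : \sigma_k \ge \sqrt{\gamma}} \sigma_k u_k v_k^T$, i.e. obtained by discarding all singular values smaller than $\sqrt{\gamma}$. For a matrix ${\mathbf A} \in \mathbb{R}^{n\times d}$ with $j$-th row ${\mathbf A}[j,:]$, the $j$-th leverage score is $\ell_j({\mathbf A}) = {\mathbf A}[j,:]^T ({\mathbf A}^T {\mathbf A})^{+} {\mathbf A}[j,:]$, where $(\cdot)^+$ denotes the Moore–Penrose pseudoinverse. *)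

theory Defs
  imports "HOL-Analysis.Analysis"
begin

definition is_pinv :: "real^'m^'n \<Rightarrow> real^'n^'m \<Rightarrow> bool" where
  "is_pinv A B \<longleftrightarrow> A ** B ** A = A \<and> B ** A ** B = B \<and>
     transpose (A ** B) = A ** B \<and> transpose (B ** A) = B ** A"

definition pinv :: "real^'m^'n \<Rightarrow> real^'n^'m" where
  "pinv A = (THE B. is_pinv A B)"

definition outer :: "real^'n \<Rightarrow> real^'d \<Rightarrow> real^'d^'n" where
  "outer u v = (\<chi> i j. u $ i * v $ j)"

definition leverage :: "real^'d^'n \<Rightarrow> 'n \<Rightarrow> real" where
  "leverage A j = (A $ j) \<bullet> (pinv (transpose A ** A) *v (A $ j))"

definition is_svd :: "real^'d^'n \<Rightarrow> nat \<Rightarrow> (nat \<Rightarrow> real) \<Rightarrow> (nat \<Rightarrow> real^'n) \<Rightarrow> (nat \<Rightarrow> real^'d) \<Rightarrow> bool" where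
  "is_svd X r \<sigma> u v \<longleftrightarrow>
     (\<forall>k<r. \<sigma> k > 0) \<and>
     (\<forall>k<r. \<forall>l<r. u k \<bullet> u l = (if k = l then 1 else 0)) \<and>
     (\<forall>k<r. \<forall>l<r. v k \<bullet> v l = (if k = l then 1 else 0)) \<and>
     X = (\<Sum>k<r. \<sigma> k *\<^sub>R outer (u k) (v k))"

definition smoothed :: "real \<Rightarrow> nat \<Rightarrow> (nat \<Rightarrow> real) \<Rightarrow> (nat \<Rightarrow> real^'n) \<Rightarrow> (nat \<Rightarrow> real^'d) \<Rightarrow> real^'d^'n" where
  "smoothed \<gamma> r \<sigma> u v = (\<Sum>k\<in>{k. k < r \<and> \<sigma> k \<ge> sqrt \<gamma>}. \<sigma> k *\<^sub>R outer (u k) (v k))"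

end

theory Submission
  imports Defs
begin

lemma sum_mmul: "(\<Sum>k\<in>S. f k) ** (B::real^'a^'b) = (\<Sum>k\<in>S. f k ** B)"
  by (simp add: vec_eq_iff matrix_matrix_mult_def sum_distrib_right; subst sum.swap; simp)
lemma mmul_sum: "(B::real^'a^'b) ** (\<Sum>k\<in>S. f k) = (\<Sum>k\<in>S. B ** f k)"
  by (simp add: vec_eq_iff matrix_matrix_mult_def sum_distrib_left; subst sum.swap; simp)
lemma sum_mvec: "(\<Sum>k\<in>S. f k) *v (x::real^'a) = (\<Sum>k\<in>S. f k *v x)"
  by (simp add: vec_eq_iff matrix_vector_mult_def sum_distrib_right; subst sum.swap; simp)
lemma transpose_sum: "transpose (\<Sum>k\<in>S. f k) = (\<Sum>k\<in>S. transpose (f k))"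
  by (simp add: vec_eq_iff transpose_def)
lemma outer_mul: "outer a b ** outer c d = (b \<bullet> c) *\<^sub>R outer a d"
  by (simp add: vec_eq_iff matrix_matrix_mult_def outer_def inner_vec_def sum_distrib_left sum_distrib_right mult_ac)
lemma outer_transpose: "transpose (outer a b) = outer b a"
  by (simp add: vec_eq_iff transpose_def outer_def mult_ac)
lemma outer_mvec: "outer a b *v x = (b \<bullet> x) *\<^sub>R a"
  by (simp add: vec_eq_iff matrix_vector_mult_def outer_def inner_vec_def sum_distrib_left sum_distrib_right mult_ac)
lemma outer_row: "outer a b $ j = (a $ j) *\<^sub>R b"
  by (simp add: vec_eq_iff outer_def)

lemma gram_prod:
  assumes orth: "\<And>k l. k \<in> S \<Longrightarrow> l \<in> S \<Longrightarrow> q k \<bullet> q' l = (if k = l then 1 else 0)"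
    and fin: "finite S"
  shows "(\<Sum>k\<in>S. a k *\<^sub>R outer (p k) (q k)) ** (\<Sum>l\<in>S. b l *\<^sub>R outer (q' l) (s l))
       = (\<Sum>k\<in>S. (a k * b k) *\<^sub>R outer (p k) (s k))"
proof -
  have "(\<Sum>k\<in>S. a k *\<^sub>R outer (p k) (q k)) ** (\<Sum>l\<in>S. b l *\<^sub>R outer (q' l) (s l))
      = (\<Sum>k\<in>S. \<Sum>l\<in>S. (a k * b l * (q k \<bullet> q' l)) *\<^sub>R outer (p k) (s l))"
    apply (simp add: sum_mmul mmul_sum matrix_scalar_ac outer_mul scaleR_sum_right flip: scalar_matrix_assoc)
    apply (subst sum.swap)
    apply (simp add: mult_ac)
    done
  also have "\<dots> = (\<Sum>k\<in>S. (a k * b k) *\<^sub>R outer (p k) (s k))"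
  proof (rule sum.cong[OF refl])
    fix k assume k: "k \<in> S"
    have "(\<Sum>l\<in>S. (a k * b l * (q k \<bullet> q' l)) *\<^sub>R outer (p k) (s l))
        = (\<Sum>l\<in>S. if k = l then (a k * b k) *\<^sub>R outer (p k) (s k) else 0)"
      by (rule sum.cong[OF refl]) (simp add: orth k)
    also have "\<dots> = (a k * b k) *\<^sub>R outer (p k) (s k)"
      using k fin by (simp add: sum.delta)
    finally show "(\<Sum>l\<in>S. (a k * b l * (q k \<bullet> q' l)) *\<^sub>R outer (p k) (s l))
        = (a k * b k) *\<^sub>R outer (p k) (s k)" .
  qed
  finally show ?thesis .
qed

lemma inner_comb:
  assumes orth: "\<And>k l. k \<in> S \<Longrightarrow> l \<in> S \<Longrightarrow> v k \<bullet> v l = (if k = l then 1 else 0)"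
    and fin: "finite S"
  shows "(\<Sum>k\<in>S. c k *\<^sub>R v k) \<bullet> (\<Sum>l\<in>S. d l *\<^sub>R v l) = (\<Sum>k\<in>S. c k * d k)"
proof -
  have "(\<Sum>k\<in>S. c k *\<^sub>R v k) \<bullet> (\<Sum>l\<in>S. d l *\<^sub>R v l)
      = (\<Sum>k\<in>S. \<Sum>l\<in>S. c k * d l * (v k \<bullet> v l))"
    apply (simp add: inner_sum_left inner_sum_right sum_distrib_left)
    apply (subst sum.swap)
    apply (simp add: mult_ac)
    done
  also have "\<dots> = (\<Sum>k\<in>S. c k * d k)"
  proof (rule sum.cong[OF refl])
    fix k assume k: "k \<in> S"
    have "(\<Sum>l\<in>S. c k * d l * (v k \<bullet> v l)) = (\<Sum>l\<in>S. if k = l then c k * d k else 0)"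
      by (rule sum.cong[OF refl]) (simp add: orth k)
    also have "\<dots> = c k * d k" using k fin by (simp add: sum.delta)
    finally show "(\<Sum>l\<in>S. c k * d l * (v k \<bullet> v l)) = c k * d k" .
  qed
  finally show ?thesis .
qed

lemma inner_single:
  assumes orth: "\<And>k l. k \<in> S \<Longrightarrow> l \<in> S \<Longrightarrow> v k \<bullet> v l = (if k = l then 1 else 0)"
    and fin: "finite S" and k: "k \<in> S"
  shows "v k \<bullet> (\<Sum>l\<in>S. d l *\<^sub>R v l) = d k"
proof -
  have "v k \<bullet> (\<Sum>l\<in>S. d l *\<^sub>R v l) = (\<Sum>l\<in>S. d l * (v k \<bullet> v l))"
    by (simp add: inner_sum_right)
  also have "\<dots> = (\<Sum>l\<in>S. if k = l then d k else 0)"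
    by (rule sum.cong[OF refl]) (simp add: orth k)
  also have "\<dots> = d k" using k fin by (simp add: sum.delta)
  finally show ?thesis .
qed

lemma sq_inv: "(x::real) \<noteq> 0 \<Longrightarrow> x * x * (inverse x * inverse x) = 1 \<and> inverse x * inverse x * (x * x) = 1"
  by (simp add: field_simps)

lemma pinv_unique:
  assumes "is_pinv A B"
  shows "pinv A = B"
  unfolding pinv_def
proof (rule the_equality)
  show "is_pinv A B" by (rule assms)
next
  fix C assume C: "is_pinv A C"
  have B1: "A ** B ** A = A" "B ** A ** B = B" "transpose (A ** B) = A ** B" "transpose (B ** A) = B ** A"
    using assms by (auto simp: is_pinv_def)
  have C1: "A ** C ** A = A" "C ** A ** C = C" "transpose (A ** C) = A ** C" "transpose (C ** A) = C ** A"
    using C by (auto simp: is_pinv_def)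
  have "C = C ** (A ** C)" using C1 by (simp add: matrix_mul_assoc)
  also have "\<dots> = C ** transpose (A ** C)" using C1 by simp
  also have "\<dots> = C ** transpose (A ** B ** A ** C)" using B1 by simp
  also have "\<dots> = C ** (transpose (A ** C) ** transpose (A ** B))"
    by (simp add: matrix_transpose_mul matrix_mul_assoc)
  also have "\<dots> = C ** A ** C ** A ** B" using B1 C1 by (simp add: matrix_mul_assoc)
  also have "\<dots> = C ** A ** B" using C1 by simp
  finally have c: "C = C ** A ** B" .
  have "B = (B ** A) ** B" using B1 by simp
  also have "\<dots> = transpose (B ** A) ** B" using B1 by simp
  also have "\<dots> = transpose (B ** A ** C ** A) ** B" using C1(1) by (metis matrix_mul_assoc)
  also have "\<dots> = transpose (C ** A) ** transpose (B ** A) ** B"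
    by (simp add: matrix_transpose_mul matrix_mul_assoc)
  also have "\<dots> = C ** A ** B ** A ** B" using B1 C1 by (simp add: matrix_mul_assoc)
  also have "\<dots> = C ** A ** B" using B1(2) by (metis matrix_mul_assoc)
  finally show "C = B" using c by simp
qed

theorem mainTheorem2:
  fixes X :: "real^'d^'n" and \<gamma> :: real and r :: nat
    and \<sigma> :: "nat \<Rightarrow> real" and u :: "nat \<Rightarrow> real^'n" and v :: "nat \<Rightarrow> real^'d"
  assumes rows: "\<And>j. norm (X $ j) \<le> 1"
    and gamma: "\<gamma> > 0"
    and svd: "is_svd X r \<sigma> u v"
  shows "\<forall>j. leverage (smoothed \<gamma> r \<sigma> u v) j \<le> 1 / \<gamma>"
proof
  fix j
  define S where "S = {k. k < r \<and> \<sigma> k \<ge> sqrt \<gamma>}"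
  have finS: "finite S" unfolding S_def by simp
  have SR: "S \<subseteq> {..<r}" unfolding S_def by auto
  have pos: "\<And>k. k < r \<Longrightarrow> \<sigma> k > 0" using svd by (simp add: is_svd_def)
  have ou: "\<And>k l. k < r \<Longrightarrow> l < r \<Longrightarrow> u k \<bullet> u l = (if k = l then 1 else 0)"
    using svd by (simp add: is_svd_def)
  have ov: "\<And>k l. k < r \<Longrightarrow> l < r \<Longrightarrow> v k \<bullet> v l = (if k = l then 1 else 0)"
    using svd by (simp add: is_svd_def)
  have X: "X = (\<Sum>k<r. \<sigma> k *\<^sub>R outer (u k) (v k))"
    using svd by (simp add: is_svd_def)
  have ouS: "\<And>k l. k \<in> S \<Longrightarrow> l \<in> S \<Longrightarrow> u k \<bullet> u l = (if k = l then 1 else 0)"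
    using ou SR by (metis lessThan_iff subsetD)
  have ovS: "\<And>k l. k \<in> S \<Longrightarrow> l \<in> S \<Longrightarrow> v k \<bullet> v l = (if k = l then 1 else 0)"
    using ov SR by (metis lessThan_iff subsetD)
  have posS: "\<And>k. k \<in> S \<Longrightarrow> \<sigma> k > 0" using pos SR by auto
  have nzS: "\<And>k. k \<in> S \<Longrightarrow> \<sigma> k \<noteq> 0" using posS by (metis less_irrefl)
  define A where "A = smoothed \<gamma> r \<sigma> u v"
  have A: "A = (\<Sum>k\<in>S. \<sigma> k *\<^sub>R outer (u k) (v k))"
    unfolding A_def smoothed_def S_def by simp
  define Om where "Om = (\<lambda>w. (\<Sum>k\<in>S. w k *\<^sub>R outer (v k) (v k)))"
  have Omul: "Om w ** Om w' = Om (\<lambda>k. w k * w' k)" for w w'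
    unfolding Om_def by (rule gram_prod[OF ovS finS])
  have Otr: "transpose (Om w) = Om w" for w
    unfolding Om_def by (simp add: transpose_sum transpose_scalar outer_transpose)
  have Ocong: "(\<And>k. k \<in> S \<Longrightarrow> w k = w' k) \<Longrightarrow> Om w = Om w'" for w w'
    unfolding Om_def by (rule sum.cong) auto
  have AtA: "transpose A ** A = Om (\<lambda>k. \<sigma> k * \<sigma> k)"
  proof -
    have "transpose A = (\<Sum>k\<in>S. \<sigma> k *\<^sub>R outer (v k) (u k))"
      unfolding A by (simp add: transpose_sum transpose_scalar outer_transpose)
    then show ?thesis unfolding Om_def using gram_prod[OF ouS finS] A by simp
  qed
  define B where "B = Om (\<lambda>k. inverse (\<sigma> k * \<sigma> k))"
  have MB: "Om (\<lambda>k. \<sigma> k * \<sigma> k) ** B = Om (\<lambda>k. 1)"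
    unfolding B_def Omul by (rule Ocong) (simp add: nzS sq_inv)
  have BM: "B ** Om (\<lambda>k. \<sigma> k * \<sigma> k) = Om (\<lambda>k. 1)"
    unfolding B_def Omul by (rule Ocong) (simp add: nzS sq_inv)
  have piv: "is_pinv (Om (\<lambda>k. \<sigma> k * \<sigma> k)) B"
    unfolding is_pinv_def MB BM by (simp add: Otr B_def Omul)
  have pB: "pinv (transpose A ** A) = B" using AtA piv pinv_unique by simp
  have row: "A $ j = (\<Sum>k\<in>S. (\<sigma> k * u k $ j) *\<^sub>R v k)"
    unfolding A by (simp add: outer_row)
  have Bx: "B *v (A $ j) = (\<Sum>k\<in>S. (inverse (\<sigma> k) * u k $ j) *\<^sub>R v k)"
  proof -
    have "B *v (A $ j) = (\<Sum>k\<in>S. (inverse (\<sigma> k * \<sigma> k) * (v k \<bullet> A $ j)) *\<^sub>R v k)"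
      unfolding B_def Om_def by (simp add: sum_mvec outer_mvec flip: scaleR_matrix_vector_assoc)
    also have "\<dots> = (\<Sum>k\<in>S. (inverse (\<sigma> k) * u k $ j) *\<^sub>R v k)"
    proof (rule sum.cong[OF refl])
      fix k assume k: "k \<in> S"
      have "v k \<bullet> A $ j = \<sigma> k * u k $ j"
        unfolding row by (rule inner_single[OF ovS finS k])
      then show "(inverse (\<sigma> k * \<sigma> k) * (v k \<bullet> A $ j)) *\<^sub>R v k = (inverse (\<sigma> k) * u k $ j) *\<^sub>R v k"
        using posS[OF k] by (simp add: field_simps)
    qed
    finally show ?thesis .
  qed
  have lev: "leverage A j = (\<Sum>k\<in>S. (u k $ j)^2)"
  proof -
    have "leverage A j = (\<Sum>k\<in>S. (\<sigma> k * u k $ j) * (inverse (\<sigma> k) * u k $ j))"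
      unfolding leverage_def pB Bx by (subst row) (rule inner_comb[OF ovS finS])
    also have "\<dots> = (\<Sum>k\<in>S. (u k $ j)^2)"
      by (rule sum.cong[OF refl]) (simp add: nzS field_simps power2_eq_square)
    finally show ?thesis .
  qed
  have ovR: "\<And>k l. k \<in> {..<r} \<Longrightarrow> l \<in> {..<r} \<Longrightarrow> v k \<bullet> v l = (if k = l then 1 else 0)"
    using ov by auto
  have rowX: "X $ j = (\<Sum>k\<in>{..<r}. (\<sigma> k * u k $ j) *\<^sub>R v k)"
    unfolding X by (simp add: outer_row)
  have nX: "(\<Sum>k<r. (\<sigma> k * u k $ j) * (\<sigma> k * u k $ j)) \<le> 1"
  proof -
    have "(\<Sum>k<r. (\<sigma> k * u k $ j) * (\<sigma> k * u k $ j)) = X $ j \<bullet> X $ j"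
      unfolding rowX by (rule inner_comb[OF ovR, symmetric]) auto
    also have "\<dots> = (norm (X $ j))^2" by (simp add: power2_norm_eq_inner)
    also have "\<dots> \<le> 1" using rows[of j] norm_ge_zero[of "X $ j"]
      by (simp add: power_le_one)
    finally show ?thesis .
  qed
  have "\<gamma> * (\<Sum>k\<in>S. (u k $ j)^2) = (\<Sum>k\<in>S. \<gamma> * (u k $ j)^2)"
    by (simp add: sum_distrib_left)
  also have "\<dots> \<le> (\<Sum>k\<in>S. (\<sigma> k * u k $ j) * (\<sigma> k * u k $ j))"
  proof (rule sum_mono)
    fix k assume k: "k \<in> S"
    have "sqrt \<gamma> \<le> \<sigma> k" using k unfolding S_def by simp
    then have "(sqrt \<gamma>)^2 \<le> (\<sigma> k)^2" using gamma by (intro power_mono) auto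
    then have "\<gamma> \<le> (\<sigma> k)^2" using gamma by simp
    then show "\<gamma> * (u k $ j)^2 \<le> (\<sigma> k * u k $ j) * (\<sigma> k * u k $ j)"
      by (metis mult_right_mono zero_le_power2 power2_eq_square power_mult_distrib)
  qed
  also have "\<dots> \<le> (\<Sum>k<r. (\<sigma> k * u k $ j) * (\<sigma> k * u k $ j))"
    by (rule sum_mono2) (use SR in auto)
  also have "\<dots> \<le> 1" by (rule nX)
  finally have "\<gamma> * (\<Sum>k\<in>S. (u k $ j)^2) \<le> 1" .
  then show "leverage (smoothed \<gamma> r \<sigma> u v) j \<le> 1 / \<gamma>"
    using lev gamma unfolding A_def by (simp add: field_simps)
qed

end
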